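(* Let $\mathcal{A}$ be a unital $C^*$-algebra and $x_1,\ldots,x_k\in\mathcal{A}$. If $C^*_1(x_1,\ldots,x_k)$ is $n$-homogeneous for some $n>1$, then $C^*_1(x_1,\ldots,x_k)=C^*(x_1,\ldots,x_k)$.
   Context: $C^*(x_1,\ldots,x_k)$ is the $C^*$-subalgebra of $\mathcal{A}$ generated by $x_1,\ldots,x_k$; $C^*_1(x_1,\ldots,x_k)$ is the smallest $C^*$-subalgebra containing $x_1,\ldots,x_k$ and the unit of $\mathcal{A}$. A $C^*$-algebra is $n$-homogeneous if every nonzero irreducible representation acts on an $n$-dimensional Hilbert space. *)

theory Defs
  imports "HOL-Analysis.Analysis"
begin

text \<open>A unital C*-algebra: a unital Banach algebra (norm 1 = 1) carrying a complex
  scalar multiplication sc extending the real one, and an involution st satisfying the C*-identity.\<close>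

definition cstar_algebra :: "(complex \<Rightarrow> 'a::{real_normed_algebra_1,banach} \<Rightarrow> 'a) \<Rightarrow> ('a \<Rightarrow> 'a) \<Rightarrow> bool"
  where "cstar_algebra sc st \<longleftrightarrow>
    (\<forall>r x. sc (complex_of_real r) x = scaleR r x) \<and>
    (\<forall>a b x. sc a (sc b x) = sc (a * b) x) \<and>
    (\<forall>a x y. sc a (x + y) = sc a x + sc a y) \<and>
    (\<forall>a b x. sc (a + b) x = sc a x + sc b x) \<and>
    (\<forall>a x y. sc a (x * y) = sc a x * y) \<and>
    (\<forall>a x y. sc a (x * y) = x * sc a y) \<and>
    (\<forall>a x. norm (sc a x) = cmod a * norm x) \<and>
    (\<forall>x. st (st x) = x) \<and>
    (\<forall>x y. st (x + y) = st x + st y) \<and>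
    (\<forall>a x. st (sc a x) = sc (cnj a) (st x)) \<and>
    (\<forall>x y. st (x * y) = st y * st x) \<and>
    (\<forall>x. norm (st x * x) = (norm x)\<^sup>2)"

definition cstar_subalgebra :: "(complex \<Rightarrow> 'a \<Rightarrow> 'a) \<Rightarrow> ('a \<Rightarrow> 'a) \<Rightarrow> 'a::{real_normed_algebra_1,banach} set \<Rightarrow> bool"
  where "cstar_subalgebra sc st B \<longleftrightarrow> closed B \<and> 0 \<in> B \<and>
    (\<forall>x\<in>B. \<forall>y\<in>B. x + y \<in> B \<and> x * y \<in> B) \<and>
    (\<forall>a. \<forall>x\<in>B. sc a x \<in> B) \<and> (\<forall>x\<in>B. st x \<in> B)"

definition generated_cstar :: "(complex \<Rightarrow> 'a \<Rightarrow> 'a) \<Rightarrow> ('a \<Rightarrow> 'a) \<Rightarrow> 'a::{real_normed_algebra_1,banach} set \<Rightarrow> 'a set"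
  where "generated_cstar sc st X = \<Inter>{B. cstar_subalgebra sc st B \<and> X \<subseteq> B}"

definition generated_cstar1 :: "(complex \<Rightarrow> 'a \<Rightarrow> 'a) \<Rightarrow> ('a \<Rightarrow> 'a) \<Rightarrow> 'a::{real_normed_algebra_1,banach} set \<Rightarrow> 'a set"
  where "generated_cstar1 sc st X = generated_cstar sc st (insert 1 X)"

definition l2_vec :: "('i \<Rightarrow> complex) \<Rightarrow> bool"
  where "l2_vec f \<longleftrightarrow> (\<lambda>i. (cmod (f i))\<^sup>2) summable_on UNIV"

definition l2_norm :: "('i \<Rightarrow> complex) \<Rightarrow> real"
  where "l2_norm f = sqrt (infsum (\<lambda>i. (cmod (f i))\<^sup>2) UNIV)"

definition l2_inner :: "('i \<Rightarrow> complex) \<Rightarrow> ('i \<Rightarrow> complex) \<Rightarrow> complex"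
  where "l2_inner f g = infsum (\<lambda>i. cnj (f i) * g i) UNIV"

definition closed_l2_subspace :: "('i \<Rightarrow> complex) set \<Rightarrow> bool"
  where "closed_l2_subspace H \<longleftrightarrow> H \<subseteq> {f. l2_vec f} \<and> (\<lambda>_. 0) \<in> H \<and>
    (\<forall>f\<in>H. \<forall>g\<in>H. (\<lambda>i. f i + g i) \<in> H) \<and>
    (\<forall>c. \<forall>f\<in>H. (\<lambda>i. c * f i) \<in> H) \<and>
    (\<forall>s g. (\<forall>m. s m \<in> H) \<and> l2_vec g \<and> ((\<lambda>m. l2_norm (\<lambda>i. s m i - g i)) \<longlonglongrightarrow> 0) \<longrightarrow> g \<in> H)"

definition representation ::
  "(complex \<Rightarrow> 'a \<Rightarrow> 'a) \<Rightarrow> ('a \<Rightarrow> 'a) \<Rightarrow> 'a::{real_normed_algebra_1,banach} set \<Rightarrow>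
   ('i \<Rightarrow> complex) set \<Rightarrow> ('a \<Rightarrow> ('i \<Rightarrow> complex) \<Rightarrow> ('i \<Rightarrow> complex)) \<Rightarrow> bool"
  where "representation sc st B H \<pi> \<longleftrightarrow> closed_l2_subspace H \<and>
    (\<forall>b\<in>B. \<forall>h\<in>H. \<pi> b h \<in> H) \<and>
    (\<forall>b\<in>B. \<forall>f\<in>H. \<forall>g\<in>H. \<forall>c d. \<pi> b (\<lambda>i. c * f i + d * g i) = (\<lambda>i. c * \<pi> b f i + d * \<pi> b g i)) \<and>
    (\<forall>b\<in>B. \<exists>C. \<forall>h\<in>H. l2_norm (\<pi> b h) \<le> C * l2_norm h) \<and>
    (\<forall>a\<in>B. \<forall>b\<in>B. \<forall>h\<in>H. \<pi> (a + b) h = (\<lambda>i. \<pi> a h i + \<pi> b h i) \<and> \<pi> (a * b) h = \<pi> a (\<pi> b h)) \<and>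
    (\<forall>c. \<forall>b\<in>B. \<forall>h\<in>H. \<pi> (sc c b) h = (\<lambda>i. c * \<pi> b h i)) \<and>
    (\<forall>b\<in>B. \<forall>f\<in>H. \<forall>g\<in>H. l2_inner (\<pi> (st b) f) g = l2_inner f (\<pi> b g))"

definition irreducible_rep ::
  "(complex \<Rightarrow> 'a \<Rightarrow> 'a) \<Rightarrow> ('a \<Rightarrow> 'a) \<Rightarrow> 'a::{real_normed_algebra_1,banach} set \<Rightarrow>
   ('i \<Rightarrow> complex) set \<Rightarrow> ('a \<Rightarrow> ('i \<Rightarrow> complex) \<Rightarrow> ('i \<Rightarrow> complex)) \<Rightarrow> bool"
  where "irreducible_rep sc st B H \<pi> \<longleftrightarrow> representation sc st B H \<pi> \<and>
    (\<exists>b\<in>B. \<exists>h\<in>H. \<pi> b h \<noteq> (\<lambda>_. 0)) \<and>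
    (\<forall>K. closed_l2_subspace K \<and> K \<subseteq> H \<and> (\<forall>b\<in>B. \<forall>h\<in>K. \<pi> b h \<in> K) \<longrightarrow> K = {\<lambda>_. 0} \<or> K = H)"

definition has_dim :: "('i \<Rightarrow> complex) set \<Rightarrow> nat \<Rightarrow> bool"
  where "has_dim H n \<longleftrightarrow> (\<exists>e. (\<forall>j<n. e j \<in> H) \<and>
    H = {(\<lambda>i. \<Sum>j<n. c j * e j i) | c. True} \<and>
    (\<forall>c. (\<lambda>i. \<Sum>j<n. c j * e j i) = (\<lambda>_. 0) \<longrightarrow> (\<forall>j<n. c j = 0)))"

text \<open>Every irreducible representation of B is unitarily
  equivalent to one on a closed subspace of l2(A) (its Hilbert dimension is at most card A), so
  quantifying over representations on closed subspaces of l2(A) covers all of them.\<close>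
definition n_homogeneous ::
  "(complex \<Rightarrow> 'a \<Rightarrow> 'a) \<Rightarrow> ('a \<Rightarrow> 'a) \<Rightarrow> 'a::{real_normed_algebra_1,banach} set \<Rightarrow> nat \<Rightarrow> bool"
  where "n_homogeneous sc st B n \<longleftrightarrow>
    (\<forall>(H :: ('a \<Rightarrow> complex) set) \<pi>. irreducible_rep sc st B H \<pi> \<longrightarrow> has_dim H n)"

end

theory Submission
  imports Defs
begin


definition H0 :: "'i \<Rightarrow> ('i \<Rightarrow> complex) set" where "H0 i0 = {f. \<forall>i. i \<noteq> i0 \<longrightarrow> f i = 0}"

lemma H0_sum: assumes "f \<in> H0 i0" shows "infsum (\<lambda>i. (cmod (f i))\<^sup>2) UNIV = (cmod (f i0))\<^sup>2"
    and "l2_vec f" and "l2_norm f = cmod (f i0)"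
proof -
  have "infsum (\<lambda>i. (cmod (f i))\<^sup>2) UNIV = infsum (\<lambda>i. (cmod (f i))\<^sup>2) {i0}"
    using assms by (intro infsum_cong_neutral) (auto simp: H0_def)
  thus 1: "infsum (\<lambda>i. (cmod (f i))\<^sup>2) UNIV = (cmod (f i0))\<^sup>2" by simp
  have "(\<lambda>i. (cmod (f i))\<^sup>2) summable_on UNIV \<longleftrightarrow> (\<lambda>i. (cmod (f i))\<^sup>2) summable_on {i0}"
    using assms by (intro summable_on_cong_neutral) (auto simp: H0_def)
  thus "l2_vec f" unfolding l2_vec_def by simp
  show "l2_norm f = cmod (f i0)" unfolding l2_norm_def 1 by simp
qed

lemma H0_inner: assumes "f \<in> H0 i0" "g \<in> H0 i0" shows "l2_inner f g = cnj (f i0) * g i0"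
proof -
  have "infsum (\<lambda>i. cnj (f i) * g i) UNIV = infsum (\<lambda>i. cnj (f i) * g i) {i0}"
    using assms by (intro infsum_cong_neutral) (auto simp: H0_def)
  thus ?thesis unfolding l2_inner_def by simp
qed

lemma H0_closed: "closed_l2_subspace (H0 i0)"
  unfolding closed_l2_subspace_def
proof (intro conjI allI ballI impI subsetI)
  show "f \<in> {f. l2_vec f}" if "f \<in> H0 i0" for f using H0_sum(2)[OF that] by simp
  show "(\<lambda>_. 0) \<in> H0 i0" by (simp add: H0_def)
  show "(\<lambda>i. f i + g i) \<in> H0 i0" if "f \<in> H0 i0" "g \<in> H0 i0" for f g using that by (simp add: H0_def)
  show "(\<lambda>i. c * f i) \<in> H0 i0" if "f \<in> H0 i0" for c f using that by (simp add: H0_def)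
next
  fix s g assume a: "(\<forall>m. s m \<in> H0 i0) \<and> l2_vec g \<and> (\<lambda>m. l2_norm (\<lambda>i. s m i - g i)) \<longlonglongrightarrow> 0"
  show "g \<in> H0 i0" unfolding H0_def
  proof (intro CollectI allI impI)
    fix j assume j: "j \<noteq> i0"
    have gs: "(\<lambda>i. (cmod (g i))\<^sup>2) summable_on (UNIV - {i0})"
      using a unfolding l2_vec_def by (rule summable_on_subset[OF conjunct1[OF conjunct2]]) auto
    have b: "cmod (g j) \<le> l2_norm (\<lambda>i. s m i - g i)" for m
    proof -
      define D where "D i = (cmod (s m i - g i))\<^sup>2" for i
      have sm: "s m i = 0" if "i \<noteq> i0" for i using a that unfolding H0_def by auto
      have "D summable_on (UNIV - {i0}) \<longleftrightarrow> (\<lambda>i. (cmod (g i))\<^sup>2) summable_on (UNIV - {i0})"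
        by (intro summable_on_cong_neutral) (auto simp: D_def sm)
      hence "D summable_on (UNIV - {i0})" using gs by simp
      hence "D summable_on (insert i0 (UNIV - {i0}))" by (simp only: summable_on_insert_iff)
      hence Ds: "D summable_on UNIV" by (simp add: insert_Diff)
      have "infsum D {j} \<le> infsum D UNIV"
        by (rule infsum_mono_neutral) (auto simp: Ds D_def)
      hence "(cmod (g j))\<^sup>2 \<le> infsum D UNIV" by (simp add: D_def sm j)
      hence "sqrt ((cmod (g j))\<^sup>2) \<le> sqrt (infsum D UNIV)" by (rule real_sqrt_le_mono)
      thus ?thesis unfolding l2_norm_def D_def by simp
    qed
    have "cmod (g j) \<le> 0"
      using a b by (intro LIMSEQ_le_const[of "\<lambda>m. l2_norm (\<lambda>i. s m i - g i)"]) auto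
    thus "g j = 0" by simp
  qed
qed

lemma H0_dim: fixes n :: nat assumes "has_dim (H0 i0) n" "n > 1" shows False
proof -
  obtain e where e: "\<forall>j<n. e j \<in> H0 i0"
    and ind: "\<forall>c. (\<lambda>i. \<Sum>j<n. c j * e j i) = (\<lambda>_. 0) \<longrightarrow> (\<forall>j<n. c j = 0)"
    using assms(1) unfolding has_dim_def by blast
  have e0: "e 0 i = 0" "e 1 i = 0" if "i \<noteq> i0" for i using e assms(2) that unfolding H0_def by auto
  have sum2: "(\<Sum>j<n. c j * e j i) = c 0 * e 0 i + c 1 * e 1 i" if "\<forall>j::nat. j > 1 \<longrightarrow> c j = 0" for c i
  proof -
    have "(\<Sum>j<n. c j * e j i) = (\<Sum>j\<in>{0,1}. c j * e j i)"
      using that assms(2) by (intro sum.mono_neutral_right) auto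
    thus ?thesis by simp
  qed
  define c where "c j = (if j = 0 then e 1 i0 else if j = 1 then - e 0 i0 else 0)" for j :: nat
  have "(\<lambda>i. \<Sum>j<n. c j * e j i) = (\<lambda>_. 0)"
  proof
    fix i have "(\<Sum>j<n. c j * e j i) = c 0 * e 0 i + c 1 * e 1 i" by (rule sum2) (simp add: c_def)
    also have "\<dots> = 0"
    proof (cases "i = i0")
      case True then show ?thesis by (simp add: c_def)
    next
      case False then show ?thesis using e0[OF False] by simp
    qed
    finally show "(\<Sum>j<n. c j * e j i) = 0" .
  qed
  hence "c 0 = 0" "c 1 = 0" using ind assms(2) by auto
  hence z: "e 0 i0 = 0" unfolding c_def by auto
  define c' where "c' j = (if j = 0 then 1 else 0 :: complex)" for j :: nat
  have "(\<lambda>i. \<Sum>j<n. c' j * e j i) = (\<lambda>_. 0)"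
  proof
    fix i have "(\<Sum>j<n. c' j * e j i) = c' 0 * e 0 i + c' 1 * e 1 i" by (rule sum2) (simp add: c'_def)
    also have "\<dots> = 0"
    proof (cases "i = i0")
      case True then show ?thesis by (simp add: c'_def z)
    next
      case False then show ?thesis using e0[OF False] by simp
    qed
    finally show "(\<Sum>j<n. c' j * e j i) = 0" .
  qed
  hence "c' 0 = 0" using ind assms(2) by auto
  thus False by (simp add: c'_def)
qed



context
  fixes sc :: "complex \<Rightarrow> 'a::{real_normed_algebra_1,banach} \<Rightarrow> 'a" and st :: "'a \<Rightarrow> 'a"
  assumes cs: "cstar_algebra sc st"
begin

lemma sc_ofreal: "sc (complex_of_real r) x = scaleR r x" using cs unfolding cstar_algebra_def by auto
lemma sc_assoc: "sc a (sc b x) = sc (a*b) x" using cs unfolding cstar_algebra_def by auto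
lemma sc_addR: "sc a (x + y) = sc a x + sc a y" using cs unfolding cstar_algebra_def by auto
lemma sc_addL: "sc (a + b) x = sc a x + sc b x" using cs unfolding cstar_algebra_def by auto
lemma sc_mult1: "sc a (x * y) = sc a x * y" using cs unfolding cstar_algebra_def by auto
lemma sc_mult2: "sc a (x * y) = x * sc a y" using cs unfolding cstar_algebra_def by auto
lemma sc_norm: "norm (sc a x) = cmod a * norm x" using cs unfolding cstar_algebra_def by auto
lemma st_st: "st (st x) = x" using cs unfolding cstar_algebra_def by auto
lemma st_add: "st (x + y) = st x + st y" using cs unfolding cstar_algebra_def by auto
lemma st_sc: "st (sc a x) = sc (cnj a) (st x)" using cs unfolding cstar_algebra_def by auto
lemma st_mult: "st (x * y) = st y * st x" using cs unfolding cstar_algebra_def by auto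

lemma sc_0: "sc 0 x = 0" using sc_ofreal[of 0 x] by simp
lemma sc_1: "sc 1 x = x" using sc_ofreal[of 1 x] by simp
lemma sc_m1: "sc (-1) x = - x" using sc_ofreal[of "-1" x] by simp
lemma sc_zero: "sc a 0 = 0" using sc_addR[of a 0 0] by simp
lemma sc_minus: "sc a (x - y) = sc a x - sc a y"
  using sc_addR[of a "x - y" y] by (simp add: algebra_simps)
lemma sc_diffL: "sc (a - b) x = sc a x - sc b x"
  using sc_addL[of "a - b" b x] by (simp add: algebra_simps)
lemma st_1: "st 1 = 1"
proof -
  have "st 1 = st 1 * st (st 1)" by (metis st_st mult_1_right)
  also have "\<dots> = st (st 1 * 1)" by (metis st_mult)
  also have "\<dots> = 1" by (metis st_st mult_1_right)
  finally show ?thesis .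
qed

lemma subalg_sub: "cstar_subalgebra sc st B \<Longrightarrow> x \<in> B \<Longrightarrow> y \<in> B \<Longrightarrow> x - y \<in> B"
  unfolding cstar_subalgebra_def using sc_m1[of y] by (metis diff_conv_add_uminus)

lemma gen_sub: "cstar_subalgebra sc st (generated_cstar sc st X)"
  unfolding generated_cstar_def cstar_subalgebra_def
  by (auto intro!: closed_Inter)

lemma gen_X: "X \<subseteq> generated_cstar sc st X"
  unfolding generated_cstar_def by auto

lemma gen_least: "cstar_subalgebra sc st B \<Longrightarrow> X \<subseteq> B \<Longrightarrow> generated_cstar sc st X \<subseteq> B"
  unfolding generated_cstar_def by auto


lemma sc_lin1: "sc c 1 = Re c *\<^sub>R 1 + Im c *\<^sub>R sc \<i> 1"
proof -
  have "c = complex_of_real (Re c) + complex_of_real (Im c) * \<i>" by (simp add: complex_eq_iff)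
  hence "sc c 1 = sc (complex_of_real (Re c)) 1 + sc (complex_of_real (Im c)) (sc \<i> 1)"
    by (metis sc_addL sc_assoc)
  thus ?thesis by (simp add: sc_ofreal)
qed

lemma sc_in: "cstar_subalgebra sc st B \<Longrightarrow> x \<in> B \<Longrightarrow> sc a x \<in> B"
  unfolding cstar_subalgebra_def by blast
lemma add_in: "cstar_subalgebra sc st B \<Longrightarrow> x \<in> B \<Longrightarrow> y \<in> B \<Longrightarrow> x + y \<in> B"
  unfolding cstar_subalgebra_def by blast
lemma mult_in: "cstar_subalgebra sc st B \<Longrightarrow> x \<in> B \<Longrightarrow> y \<in> B \<Longrightarrow> x * y \<in> B"
  unfolding cstar_subalgebra_def by blast
lemma st_in: "cstar_subalgebra sc st B \<Longrightarrow> x \<in> B \<Longrightarrow> st x \<in> B"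
  unfolding cstar_subalgebra_def by blast

context
  fixes S assumes S: "cstar_subalgebra sc st S" and n1: "1 \<notin> S"
begin

lemma uniq:
  assumes "y \<in> S" "y' \<in> S" "y + sc c 1 = y' + sc c' 1"
  shows "c = c'"
proof (rule ccontr)
  assume ne: "c \<noteq> c'"
  have "sc (c - c') 1 = y' - y" using assms(3) by (simp add: sc_diffL algebra_simps)
  hence "sc (c - c') 1 \<in> S" using subalg_sub[OF S assms(2,1)] by simp
  hence "sc (inverse (c - c')) (sc (c - c') 1) \<in> S" by (rule sc_in[OF S])
  also have "sc (inverse (c - c')) (sc (c - c') 1) = 1" using ne by (simp add: sc_assoc sc_1)
  finally show False using n1 by simp
qed

definition chi where "chi z = (THE c. \<exists>y\<in>S. z = y + sc c 1)"
definition BB where "BB = {y + sc c 1 | y c. y \<in> S}"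

lemma chi_eq: "y \<in> S \<Longrightarrow> chi (y + sc c 1) = c"
  unfolding chi_def by (rule the_equality) (auto dest: uniq)

lemma BB_decomp: "z \<in> BB \<Longrightarrow> z - sc (chi z) 1 \<in> S"
  unfolding BB_def using chi_eq by auto

lemma in_BB: "y \<in> S \<Longrightarrow> y + sc c 1 \<in> BB"
  unfolding BB_def by auto

lemma BB_eq: "z \<in> BB \<Longrightarrow> z = (z - sc (chi z) 1) + sc (chi z) 1" by simp

lemma dpos: "infdist 1 S > 0"
  using S n1 by (intro infdist_pos_not_in_closed) (auto simp: cstar_subalgebra_def)

lemma bound: assumes "y \<in> S" shows "cmod c * infdist 1 S \<le> norm (y + sc c 1)"
proof (cases "c = 0")
  case True then show ?thesis by simp
next
  case False
  have m: "- sc (inverse c) y \<in> S" using sc_in[OF S assms, of "- inverse c"]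
    by (metis sc_m1 sc_assoc mult_minus_left mult_1_left)
  have "y + sc c 1 = sc c (sc (inverse c) y + 1)" using False
    by (simp add: sc_addR sc_assoc sc_1)
  hence "norm (y + sc c 1) = cmod c * dist 1 (- sc (inverse c) y)"
    by (simp add: sc_norm dist_norm add.commute)
  moreover have "infdist 1 S \<le> dist 1 (- sc (inverse c) y)" using m by (rule infdist_le)
  ultimately show ?thesis by (simp add: mult_left_mono)
qed

lemma BB_closed: "closed BB"
  unfolding closed_sequential_limits
proof (intro allI impI, elim conjE)
  fix f l assume f: "\<forall>n. f n \<in> BB" and lim: "f \<longlonglongrightarrow> l"
  define c where "c n = chi (f n)" for n
  define y where "y n = f n - sc (c n) 1" for n
  have yS: "y n \<in> S" for n using BB_decomp f unfolding y_def c_def by auto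
  have fe: "f n = y n + sc (c n) 1" for n unfolding y_def by simp
  have d: "infdist 1 S > 0" by (rule dpos)
  have "Cauchy c"
    unfolding Cauchy_def
  proof (intro allI impI)
    fix e :: real assume e: "e > 0"
    from lim have "Cauchy f" by (rule LIMSEQ_imp_Cauchy)
    then obtain M where M: "\<forall>m\<ge>M. \<forall>n\<ge>M. dist (f m) (f n) < e * infdist 1 S"
      using d e unfolding Cauchy_def by (meson mult_pos_pos)
    show "\<exists>M. \<forall>m\<ge>M. \<forall>n\<ge>M. dist (c m) (c n) < e"
    proof (intro exI allI impI)
      fix m n assume "m \<ge> M" "n \<ge> M"
      have "f m - f n = (y m - y n) + sc (c m - c n) 1" unfolding fe by (simp add: sc_diffL algebra_simps)
      hence "cmod (c m - c n) * infdist 1 S \<le> dist (f m) (f n)"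
        using bound[OF subalg_sub[OF S yS yS]] by (simp add: dist_norm)
      also have "\<dots> < e * infdist 1 S" using M \<open>m \<ge> M\<close> \<open>n \<ge> M\<close> by blast
      finally show "dist (c m) (c n) < e" using d by (simp add: dist_norm)
    qed
  qed
  then obtain L where cL: "c \<longlonglongrightarrow> L" using Cauchy_convergent_iff convergent_def by blast
  have "(\<lambda>n. sc (c n) 1) \<longlonglongrightarrow> sc L 1"
  proof -
    have "(\<lambda>n. Re (c n) *\<^sub>R 1 + Im (c n) *\<^sub>R sc \<i> 1) \<longlonglongrightarrow> Re L *\<^sub>R 1 + Im L *\<^sub>R sc \<i> 1"
      by (intro tendsto_intros cL)
    moreover have "(\<lambda>n. sc (c n) 1) = (\<lambda>n. Re (c n) *\<^sub>R 1 + Im (c n) *\<^sub>R sc \<i> 1)"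
      by (rule ext, rule sc_lin1)
    ultimately show ?thesis using sc_lin1[of L] by simp
  qed
  hence "y \<longlonglongrightarrow> l - sc L 1" unfolding y_def by (intro tendsto_intros lim)
  moreover have "closed S" using S unfolding cstar_subalgebra_def by blast
  ultimately have "l - sc L 1 \<in> S" using yS closed_sequential_limits[of S] by blast
  from in_BB[OF this, of L] show "l \<in> BB" by simp
qed

lemma prod_id: "(ya + sc ca 1) * (yb + sc cb 1) = (ya * yb + sc cb ya + sc ca yb) + sc (ca * cb) 1"
proof -
  have 0: "(ya + sc ca 1) * (yb + sc cb 1) = ya * yb + ya * sc cb 1 + sc ca 1 * yb + sc ca 1 * sc cb 1"
    by (simp add: algebra_simps)
  have 1: "ya * sc cb 1 = sc cb ya" by (metis sc_mult2 mult_1_right)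
  have 2: "sc ca 1 * yb = sc ca yb" by (metis sc_mult1 mult_1_left)
  have 3: "sc ca 1 * sc cb 1 = sc (ca * cb) 1" by (metis sc_mult1 mult_1_left sc_assoc)
  show ?thesis unfolding 0 1 2 3 ..
qed

lemma BB_rep: assumes "a \<in> BB" obtains ya where "ya \<in> S" "a = ya + sc (chi a) 1"
  using BB_decomp[OF assms] by (metis diff_add_cancel)

lemma BB_ops:
  assumes a: "a \<in> BB" and b: "b \<in> BB"
  shows "a + b \<in> BB \<and> chi (a + b) = chi a + chi b"
    "a * b \<in> BB \<and> chi (a * b) = chi a * chi b"
    "sc c a \<in> BB \<and> chi (sc c a) = c * chi a" "st a \<in> BB \<and> chi (st a) = cnj (chi a)"
proof -
  obtain ya where ya: "ya \<in> S" and ae: "a = ya + sc (chi a) 1" using BB_rep[OF a] by blast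
  obtain yb where yb: "yb \<in> S" and be: "b = yb + sc (chi b) 1" using BB_rep[OF b] by blast
  have e1: "a + b = (ya + yb) + sc (chi a + chi b) 1"
    by (subst ae, subst be) (simp add: sc_addL)
  show "a + b \<in> BB \<and> chi (a + b) = chi a + chi b"
    unfolding e1 using add_in[OF S ya yb] by (simp add: in_BB chi_eq)
  have m: "ya * yb + sc (chi b) ya + sc (chi a) yb \<in> S"
    using ya yb by (intro add_in[OF S] mult_in[OF S] sc_in[OF S])
  have e2: "a * b = (ya * yb + sc (chi b) ya + sc (chi a) yb) + sc (chi a * chi b) 1"
    by (subst ae, subst be, rule prod_id)
  show "a * b \<in> BB \<and> chi (a * b) = chi a * chi b"
    unfolding e2 using m by (simp add: in_BB chi_eq)
  have e3: "sc c a = sc c ya + sc (c * chi a) 1"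
    by (subst ae) (simp add: sc_addR sc_assoc)
  show "sc c a \<in> BB \<and> chi (sc c a) = c * chi a"
    unfolding e3 using sc_in[OF S ya] by (simp add: in_BB chi_eq)
  have e4: "st a = st ya + sc (cnj (chi a)) 1"
    by (subst ae) (simp add: st_add st_sc st_1)
  show "st a \<in> BB \<and> chi (st a) = cnj (chi a)"
    unfolding e4 using st_in[OF S ya] by (simp add: in_BB chi_eq)
qed

lemma BB_zero: "0 \<in> BB" using in_BB[of 0 0] S by (simp add: sc_0 cstar_subalgebra_def)

lemma BB_sub: "cstar_subalgebra sc st BB"
  unfolding cstar_subalgebra_def
proof (intro conjI BB_closed BB_zero ballI allI)
  fix a b assume "a \<in> BB" "b \<in> BB"
  from BB_ops(1,2)[OF this] show "a + b \<in> BB" "a * b \<in> BB" by simp_all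
next
  fix c a assume "a \<in> BB"
  from BB_ops(3)[OF this this] show "sc c a \<in> BB" by simp
next
  fix a assume "a \<in> BB"
  from BB_ops(4)[OF this this] show "st a \<in> BB" by simp
qed

lemma chi_1: "chi 1 = 1" using chi_eq[of 0 1] S by (simp add: sc_1 cstar_subalgebra_def)
lemma one_BB: "1 \<in> BB" using in_BB[of 0 1] S by (simp add: sc_1 cstar_subalgebra_def)
lemma S_BB: "y \<in> S \<Longrightarrow> y \<in> BB" using in_BB[of y 0] by (simp add: sc_0)

lemma no_one:
  fixes n :: nat
  assumes X: "X \<subseteq> S" and hom: "n_homogeneous sc st (generated_cstar sc st (insert 1 X)) n" and n: "n > 1"
  shows False
proof -
  let ?C = "generated_cstar sc st (insert 1 X)"
  have CB: "?C \<subseteq> BB" using gen_least[OF BB_sub] one_BB S_BB X by blast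
  define \<pi> where "\<pi> b h = (\<lambda>i. chi b * h i)" for b and h :: "'a \<Rightarrow> complex"
  let ?H = "H0 (0::'a)"
  have r1: "closed_l2_subspace ?H" by (rule H0_closed)
  have r2: "\<forall>b\<in>?C. \<forall>h\<in>?H. \<pi> b h \<in> ?H" by (simp add: \<pi>_def H0_def)
  have r3: "\<forall>b\<in>?C. \<forall>f\<in>?H. \<forall>g\<in>?H. \<forall>c d. \<pi> b (\<lambda>i. c * f i + d * g i) = (\<lambda>i. c * \<pi> b f i + d * \<pi> b g i)"
    by (simp add: \<pi>_def algebra_simps)
  have r4: "\<forall>b\<in>?C. \<exists>C. \<forall>h\<in>?H. l2_norm (\<pi> b h) \<le> C * l2_norm h"
  proof (intro ballI exI)
    fix b h assume "h \<in> ?H"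
    moreover hence "\<pi> b h \<in> ?H" by (simp add: \<pi>_def H0_def)
    ultimately show "l2_norm (\<pi> b h) \<le> cmod (chi b) * l2_norm h"
      by (simp add: H0_sum(3) \<pi>_def norm_mult)
  qed
  have r5: "\<forall>a\<in>?C. \<forall>b\<in>?C. \<forall>h\<in>?H. \<pi> (a + b) h = (\<lambda>i. \<pi> a h i + \<pi> b h i) \<and> \<pi> (a * b) h = \<pi> a (\<pi> b h)"
  proof (intro ballI conjI)
    fix a b h assume "a \<in> ?C" "b \<in> ?C"
    hence ab: "a \<in> BB" "b \<in> BB" using CB by auto
    show "\<pi> (a + b) h = (\<lambda>i. \<pi> a h i + \<pi> b h i)" using BB_ops(1)[OF ab] by (simp add: \<pi>_def algebra_simps)
    show "\<pi> (a * b) h = \<pi> a (\<pi> b h)" using BB_ops(2)[OF ab] by (simp add: \<pi>_def algebra_simps)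
  qed
  have r6: "\<forall>c. \<forall>b\<in>?C. \<forall>h\<in>?H. \<pi> (sc c b) h = (\<lambda>i. c * \<pi> b h i)"
  proof (intro ballI allI)
    fix c b h assume "b \<in> ?C"
    hence ab: "b \<in> BB" using CB by auto
    show "\<pi> (sc c b) h = (\<lambda>i. c * \<pi> b h i)" using BB_ops(3)[OF ab ab] by (simp add: \<pi>_def algebra_simps)
  qed
  have r7: "\<forall>b\<in>?C. \<forall>f\<in>?H. \<forall>g\<in>?H. l2_inner (\<pi> (st b) f) g = l2_inner f (\<pi> b g)"
  proof (intro ballI)
    fix b f g assume "b \<in> ?C" and f: "f \<in> ?H" and g: "g \<in> ?H"
    hence ab: "b \<in> BB" using CB by auto
    have f': "\<pi> (st b) f \<in> ?H" and g': "\<pi> b g \<in> ?H" using f g by (simp_all add: \<pi>_def H0_def)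
    show "l2_inner (\<pi> (st b) f) g = l2_inner f (\<pi> b g)"
      unfolding H0_inner[OF f' g] H0_inner[OF f g'] using BB_ops(4)[OF ab ab]
      by (simp add: \<pi>_def algebra_simps)
  qed
  have rep: "representation sc st ?C ?H \<pi>"
    unfolding representation_def by (intro conjI r1 r2 r3 r4 r5 r6 r7)
  have one: "1 \<in> ?C" using gen_X by blast
  have del: "(\<lambda>i. if i = 0 then 1 else 0) \<in> ?H" by (simp add: H0_def)
  have nz: "\<pi> 1 (\<lambda>i::'a. if i = 0 then 1 else 0) \<noteq> (\<lambda>_. 0)"
  proof
    assume "\<pi> 1 (\<lambda>i::'a. if i = 0 then 1 else 0) = (\<lambda>_. 0)"
    hence "\<pi> 1 (\<lambda>i::'a. if i = 0 then 1 else 0) 0 = 0" by simp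
    thus False by (simp add: \<pi>_def chi_1)
  qed
  have irr: "irreducible_rep sc st ?C ?H \<pi>"
    unfolding irreducible_rep_def
  proof (intro conjI rep allI impI)
    show "\<exists>b\<in>?C. \<exists>h\<in>?H. \<pi> b h \<noteq> (\<lambda>_. 0)" using one del nz by blast
  next
    fix K assume K: "closed_l2_subspace K \<and> K \<subseteq> ?H \<and> (\<forall>b\<in>?C. \<forall>h\<in>K. \<pi> b h \<in> K)"
    show "K = {\<lambda>_. 0} \<or> K = ?H"
    proof (cases "\<exists>f\<in>K. f \<noteq> (\<lambda>_. 0)")
      case False
      moreover have "(\<lambda>_. 0) \<in> K" using K unfolding closed_l2_subspace_def by blast
      ultimately show ?thesis by blast
    next
      case True
      then obtain f where fK: "f \<in> K" and fnz: "f \<noteq> (\<lambda>_. 0)" by blast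
      have fH: "f \<in> ?H" using fK K by blast
      have f0: "f 0 \<noteq> 0"
      proof
        assume "f 0 = 0"
        hence "f = (\<lambda>_. 0)" using fH by (auto simp: H0_def intro!: ext) (metis)
        thus False using fnz by simp
      qed
      have "?H \<subseteq> K"
      proof
        fix h assume hH: "h \<in> ?H"
        have "h = (\<lambda>i. (h 0 / f 0) * f i)"
        proof
          fix i show "h i = h 0 / f 0 * f i"
            using hH fH f0 by (cases "i = 0") (auto simp: H0_def)
        qed
        moreover have "(\<lambda>i. (h 0 / f 0) * f i) \<in> K"
          using K fK unfolding closed_l2_subspace_def by blast
        ultimately show "h \<in> K" by simp
      qed
      thus ?thesis using K by blast
    qed
  qed
  have "has_dim ?H n" using hom irr unfolding n_homogeneous_def by blast
  thus False using n by (rule H0_dim)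
qed

end
end

theorem lemma6p1:
  fixes sc :: "complex \<Rightarrow> 'a::{real_normed_algebra_1,banach} \<Rightarrow> 'a"
    and st :: "'a \<Rightarrow> 'a"
    and x :: "nat \<Rightarrow> 'a"
    and k n :: nat
  assumes "cstar_algebra sc st"
    and "n > 1"
    and "n_homogeneous sc st (generated_cstar1 sc st (x ` {1..k})) n"
  shows "generated_cstar1 sc st (x ` {1..k}) = generated_cstar sc st (x ` {1..k})"
proof -
  let ?X = "x ` {1..k}"
  let ?S = "generated_cstar sc st ?X"
  have Ssub: "cstar_subalgebra sc st ?S" by (rule gen_sub[OF assms(1)])
  show ?thesis
  proof (cases "1 \<in> ?S")
    case True
    have "generated_cstar sc st (insert 1 ?X) \<subseteq> ?S"
      using gen_least[OF assms(1) Ssub] gen_X[OF assms(1), of ?X] True by blast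
    moreover have "?S \<subseteq> generated_cstar sc st (insert 1 ?X)"
      using gen_least[OF assms(1) gen_sub[OF assms(1)], of ?X "insert 1 ?X"]
        gen_X[OF assms(1), of "insert 1 ?X"] by blast
    ultimately show ?thesis unfolding generated_cstar1_def by blast
  next
    case False
    have "False"
      using no_one[OF assms(1) Ssub False gen_X[OF assms(1)] _ assms(2)] assms(3)
      unfolding generated_cstar1_def by blast
    thus ?thesis ..
  qed
qed

end
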